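(* Let $G^{\mathcal X}_r=(V_r,E^{\mathcal X}_r,s_r)$ be an extraction order and $l\in V_r$. Then $\mathcal L_e=\mathcal L_{e'}$ for every pair of incoming edges $e,e'\in E^{\mathcal X}_r$ of $l$.
   Context: An extraction order of a directed graph $G_r=(V_r,E_r)$ is a rooted directed acyclic graph $G^{\mathcal X}_r=(V_r,E^{\mathcal X}_r,s_r)$ in which every node is reachable from $s_r$ and $E^{\mathcal X}_r$ is obtained from $E_r$ by reversing some (possibly no) edges. A confluence from $i$ to $j$ is a pair of directed paths in $E^{\mathcal X}_r$ from $i$ to $j$ sharing no node other than $i$ and $j$. For $e\in E^{\mathcal X}_r$, the label set $\mathcal L_e\subseteq V_r$ is the set of nodes $j$ such that $e$ belongs to some confluence with target $j$. *)

theory Defs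
  imports Main
begin

definition dpath :: "('v \<times> 'v) set \<Rightarrow> 'v list \<Rightarrow> 'v \<Rightarrow> 'v \<Rightarrow> bool" where
  "dpath Ed p i j \<longleftrightarrow> p \<noteq> [] \<and> hd p = i \<and> last p = j \<and>
     (\<forall>k. Suc k < length p \<longrightarrow> (p ! k, p ! Suc k) \<in> Ed)"

definition path_edges :: "'v list \<Rightarrow> ('v \<times> 'v) set" where
  "path_edges p = {(p ! k, p ! Suc k) | k. Suc k < length p}"

definition extraction_order ::
  "'v set \<Rightarrow> ('v \<times> 'v) set \<Rightarrow> ('v \<times> 'v) set \<Rightarrow> 'v \<Rightarrow> bool" where
  "extraction_order V E EXo s \<longleftrightarrow>
     E \<subseteq> V \<times> V \<and> s \<in> V \<and>
     (\<exists>R \<subseteq> E. EXo = (E - R) \<union> R\<inverse>) \<and>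
     acyclic EXo \<and>
     (\<forall>v\<in>V. (s, v) \<in> EXo\<^sup>*)"

definition confluence :: "('v \<times> 'v) set \<Rightarrow> 'v \<Rightarrow> 'v \<Rightarrow> 'v list \<Rightarrow> 'v list \<Rightarrow> bool" where
  "confluence EXo i j p1 p2 \<longleftrightarrow>
     dpath EXo p1 i j \<and> dpath EXo p2 i j \<and> p1 \<noteq> p2 \<and> set p1 \<inter> set p2 \<subseteq> {i, j}"

definition label_set :: "'v set \<Rightarrow> ('v \<times> 'v) set \<Rightarrow> 'v \<times> 'v \<Rightarrow> 'v set" where
  "label_set V EXo e = {j \<in> V. \<exists>i p1 p2. confluence EXo i j p1 p2 \<and>
                                  e \<in> path_edges p1 \<union> path_edges p2}"

end

theory Submission
  imports Defs
begin

lemma dpath_single[simp]: "dpath E [x] x' z \<longleftrightarrow> x = x' \<and> x = z"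
  unfolding dpath_def by auto

lemma dpath_cons2[simp]: "dpath E (x#y#r) x' z \<longleftrightarrow> x = x' \<and> (x,y) \<in> E \<and> dpath E (y#r) y z"
  unfolding dpath_def
  apply (auto simp: less_Suc_eq_0_disj)
  done

lemma dpath_nil[simp]: "\<not> dpath E [] x z"
  unfolding dpath_def by auto

lemma path_edges_single[simp]: "path_edges [x] = {}"
  unfolding path_edges_def by auto

lemma path_edges_cons2[simp]: "path_edges (x#y#r) = insert (x,y) (path_edges (y#r))"
proof -
  have "{((x#y#r) ! k, (x#y#r) ! Suc k) | k. Suc k < length (x#y#r)} =
        insert (x,y) {((y#r) ! k, (y#r) ! Suc k) | k. Suc k < length (y#r)}" (is "?L = ?R")
  proof
    show "?L \<subseteq> ?R"
    proof
      fix e assume "e \<in> ?L"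
      then obtain k where k: "e = ((x#y#r) ! k, (x#y#r) ! Suc k)" "Suc k < length (x#y#r)" by blast
      show "e \<in> ?R"
      proof (cases k)
        case 0 then show ?thesis using k by simp
      next
        case (Suc m) then show ?thesis using k by auto
      qed
    qed
  next
    show "?R \<subseteq> ?L"
    proof
      fix e assume "e \<in> ?R"
      then consider "e = (x,y)" | k where "e = ((y#r) ! k, (y#r) ! Suc k)" "Suc k < length (y#r)" by blast
      then show "e \<in> ?L"
      proof cases
        case 1 then show ?thesis by (intro CollectI exI[of _ 0]) simp
      next
        case (2 k) then show ?thesis by (intro CollectI exI[of _ "Suc k"]) simp
      qed
    qed
  qed
  then show ?thesis unfolding path_edges_def .
qed
lemma dpath_hd: "dpath E p x y \<Longrightarrow> \<exists>r. p = x # r"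
  unfolding dpath_def by (cases p) auto

lemma F1: "dpath E p x y \<Longrightarrow> v \<in> set p \<Longrightarrow> (x,v) \<in> E\<^sup>* \<and> (v,y) \<in> E\<^sup>*"
proof (induction p arbitrary: x v)
  case Nil then show ?case by simp
next
  case (Cons u p)
  show ?case
  proof (cases p)
    case Nil then show ?thesis using Cons.prems by auto
  next
    case (Cons w r)
    have d: "u = x" "(u,w) \<in> E" "dpath E p w y" using Cons.prems Cons by auto
    have w: "w \<in> set p" using Cons by simp
    have wy: "(w,y) \<in> E\<^sup>*" using Cons.IH[OF d(3) w] by simp
    show ?thesis
    proof (cases "v = u")
      case True
      then show ?thesis using d wy by (meson converse_rtrancl_into_rtrancl rtrancl.rtrancl_refl)
    next
      case False
      then have vp: "v \<in> set p" using Cons.prems by auto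
      have "(w,v) \<in> E\<^sup>* \<and> (v,y) \<in> E\<^sup>*" using Cons.IH[OF d(3) vp] .
      then show ?thesis using d by (meson converse_rtrancl_into_rtrancl)
    qed
  qed
qed

lemma F2: "(x,y) \<in> E\<^sup>* \<Longrightarrow> \<exists>p. dpath E p x y"
proof (induction rule: converse_rtrancl_induct)
  case base
  have "dpath E [y] y y" by simp
  then show ?case by (rule exI)
next
  case (step x z)
  from step.IH obtain p where p: "dpath E p z y" by (rule exE)
  from dpath_hd[OF p] obtain r where pr: "p = z # r" by (rule exE)
  have "dpath E (x#z#r) x y" using p step.hyps(1) unfolding pr by simp
  then show ?case by (rule exI)
qed

lemma F4: "(u,w) \<in> path_edges p \<Longrightarrow> u \<in> set p \<and> w \<in> set p"
  unfolding path_edges_def by auto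

lemma F3: "dpath E p x y \<Longrightarrow> v \<in> set p \<Longrightarrow>
   \<exists>q. dpath E q v y \<and> set q \<subseteq> set p \<and> path_edges q \<subseteq> path_edges p"
proof (induction p arbitrary: x)
  case Nil then show ?case by simp
next
  case (Cons u p)
  show ?case
  proof (cases "v = u")
    case True then show ?thesis using Cons.prems by (intro exI[of _ "u#p"]) (auto simp: dpath_def)
  next
    case False
    then have vp: "v \<in> set p" using Cons.prems by auto
    then obtain w r where pw: "p = w # r" by (cases p) auto
    then have "dpath E p w y" using Cons.prems by auto
    from Cons.IH[OF this vp] obtain q where "dpath E q v y \<and> set q \<subseteq> set p \<and> path_edges q \<subseteq> path_edges p" by blast
    then show ?thesis using pw by (intro exI[of _ q]) auto
  qed
qed

lemma F5: "dpath E p x y \<Longrightarrow> dpath E q y' z \<Longrightarrow> (y,y') \<in> E \<Longrightarrow>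
   dpath E (p@q) x z \<and> (y,y') \<in> path_edges (p@q)"
proof (induction p arbitrary: x)
  case Nil then show ?case by simp
next
  case (Cons u p)
  show ?case
  proof (cases p)
    case Nil
    from dpath_hd[OF Cons.prems(2)] obtain r where "q = y' # r" by (rule exE)
    then show ?thesis using Cons.prems Nil by auto
  next
    case (Cons w r)
    then have "dpath E p w y" "u = x" "(u,w) \<in> E" using Cons.prems by auto
    from Cons.IH[OF this(1) Cons.prems(2,3)] show ?thesis
      using Cons \<open>u = x\<close> \<open>(u,w) \<in> E\<close> by auto
  qed
qed

lemma F6: "dpath E p x y \<Longrightarrow> dpath E q y z \<Longrightarrow>
   \<exists>r. dpath E r x z \<and> set r \<subseteq> set p \<union> set q"
proof (induction p arbitrary: x)
  case Nil then show ?case by simp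
next
  case (Cons u p)
  show ?case
  proof (cases p)
    case Nil
    then show ?thesis using Cons.prems by (intro exI[of _ q]) auto
  next
    case (Cons w r)
    then have "dpath E p w y" "u = x" "(u,w) \<in> E" using Cons.prems by auto
    from Cons.IH[OF this(1) Cons.prems(2)] obtain r' where r': "dpath E r' w z" "set r' \<subseteq> set p \<union> set q" by blast
    from dpath_hd[OF r'(1)] obtain r'' where "r' = w # r''" by (rule exE)
    then show ?thesis using r' \<open>u = x\<close> \<open>(u,w) \<in> E\<close> Cons
      by (intro exI[of _ "u # r'"]) auto
  qed
qed

lemma lastK_gen: "dpath E Q x b \<Longrightarrow> (\<forall>v\<in>set Q. v \<notin> K) \<or>
   (\<exists>y U. dpath E U y b \<and> set U \<subseteq> set Q \<and> y \<in> K \<and> (\<forall>v \<in> set (tl U). v \<notin> K))"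
proof (induction Q arbitrary: x)
  case Nil then show ?case by simp
next
  case (Cons u p)
  show ?case
  proof (cases p)
    case Nil
    then show ?thesis using Cons.prems
      by (cases "u \<in> K") (auto intro!: exI[of _ "[u]"])
  next
    case (Cons w r)
    then have d: "dpath E p w b" "u = x" "(u,w) \<in> E" using Cons.prems by auto
    from Cons.IH[OF d(1)] show ?thesis
    proof
      assume none: "\<forall>v\<in>set p. v \<notin> K"
      show ?thesis
      proof (cases "u \<in> K")
        case True
        then show ?thesis using none Cons.prems
          by (intro disjI2 exI[of _ u] exI[of _ "u#p"]) (auto simp: d)
      next
        case False then show ?thesis using none by auto
      qed
    next
      assume "\<exists>y U. dpath E U y b \<and> set U \<subseteq> set p \<and> y \<in> K \<and> (\<forall>v\<in>set (tl U). v \<notin> K)"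
      then obtain y U where "dpath E U y b" "set U \<subseteq> set p" "y \<in> K" "\<forall>v\<in>set (tl U). v \<notin> K"
        by blast
      then have "dpath E U y b \<and> set U \<subseteq> set (u#p) \<and> y \<in> K \<and> (\<forall>v\<in>set (tl U). v \<notin> K)" by auto
      then show ?thesis by blast
    qed
  qed
qed

lemma lastK: assumes "dpath E Q x b" "x \<in> K" shows
   "\<exists>y U. dpath E U y b \<and> set U \<subseteq> set Q \<and> y \<in> K \<and> (\<forall>v \<in> set (tl U). v \<notin> K)"
proof -
  from dpath_hd[OF assms(1)] obtain r where "Q = x # r" by (rule exE)
  then have "\<not> (\<forall>v\<in>set Q. v \<notin> K)" using assms(2) by auto
  then show ?thesis using lastK_gen[OF assms(1), of K] by blast
qed

lemma core:
  assumes Q: "dpath E Q x b"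
    and xK: "\<exists>W. dpath E W x j \<and> set W \<inter> set P \<subseteq> {j} \<and> (b,l) \<notin> path_edges W"
    and bl: "(b,l) \<in> E" and P: "dpath E P l j"
  shows "\<exists>y A W. confluence E y j A W \<and> (b,l) \<in> path_edges A"
proof -
  define K where "K = {v. \<exists>W. dpath E W v j \<and> set W \<inter> set P \<subseteq> {j} \<and> (b,l) \<notin> path_edges W}"
  have "x \<in> K" using xK K_def by auto
  from lastK[OF Q this] obtain y U where U: "dpath E U y b" "y \<in> K" "\<forall>v \<in> set (tl U). v \<notin> K"
    by blast
  from U(2) obtain W where W: "dpath E W y j" "set W \<inter> set P \<subseteq> {j}" "(b,l) \<notin> path_edges W"
    unfolding K_def by blast
  from F5[OF U(1) P bl] have A: "dpath E (U@P) y j" "(b,l) \<in> path_edges (U@P)" by auto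
  from dpath_hd[OF U(1)] obtain U' where U': "U = y # U'" by (rule exE)
  have "set (U@P) \<inter> set W \<subseteq> {y,j}"
  proof
    fix v assume v: "v \<in> set (U@P) \<inter> set W"
    show "v \<in> {y,j}"
    proof (cases "v \<in> set P")
      case True then show ?thesis using v W(2) by auto
    next
      case False
      then have "v \<in> set U" using v by auto
      show ?thesis
      proof (rule ccontr)
        assume "v \<notin> {y,j}"
        then have vt: "v \<in> set (tl U)" using \<open>v \<in> set U\<close> U' by auto
        from F3[OF W(1)] v obtain q where "dpath E q v j" "set q \<subseteq> set W" "path_edges q \<subseteq> path_edges W"
          by blast
        then have "v \<in> K" unfolding K_def using W by blast
        then show False using U(3) vt by auto
      qed
    qed
  qed
  moreover have "U@P \<noteq> W" using A(2) W(3) by auto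
  ultimately have "confluence E y j (U@P) W" unfolding confluence_def using A W by auto
  then show ?thesis using A by blast
qed

lemma conf_sym: "confluence E i j p1 p2 \<Longrightarrow> confluence E i j p2 p1"
  unfolding confluence_def by auto

lemma acyc_rt: "acyclic E \<Longrightarrow> (x,y) \<in> E\<^sup>* \<Longrightarrow> (y,z) \<in> E \<Longrightarrow> (z,x) \<in> E\<^sup>* \<Longrightarrow> False"
  unfolding acyclic_def
  by (meson rtrancl_into_trancl1 trancl_rtrancl_trancl)

lemma half:
  assumes eo: "extraction_order V E EXo s"
    and al: "(a, l) \<in> EXo" and bl: "(b, l) \<in> EXo"
  shows "label_set V EXo (a, l) \<subseteq> label_set V EXo (b, l)"
proof
  fix j assume "j \<in> label_set V EXo (a, l)"
  then obtain i p1 p2 where jV: "j \<in> V" and c0: "confluence EXo i j p1 p2"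
    and e0: "(a,l) \<in> path_edges p1 \<union> path_edges p2"
    unfolding label_set_def by blast
  obtain p1 p2 where c: "confluence EXo i j p1 p2" and e: "(a,l) \<in> path_edges p1"
  proof (cases "(a,l) \<in> path_edges p1")
    case True then show ?thesis using that c0 by blast
  next
    case False then have "(a,l) \<in> path_edges p2" using e0 by blast
    then show ?thesis using that conf_sym[OF c0] by blast
  qed
  have acy: "acyclic EXo" using eo unfolding extraction_order_def by auto
  have sub: "EXo \<subseteq> V \<times> V" using eo unfolding extraction_order_def by auto
  have reach: "\<And>v. v \<in> V \<Longrightarrow> (s,v) \<in> EXo\<^sup>*" using eo unfolding extraction_order_def by auto
  have aV: "a \<in> V" and bV: "b \<in> V" using al bl sub by auto
  from F2[OF reach[OF bV]] obtain Q where Q: "dpath EXo Q s b" by (rule exE)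
  have p1: "dpath EXo p1 i j" and p2: "dpath EXo p2 i j" and int: "set p1 \<inter> set p2 \<subseteq> {i,j}"
    using c unfolding confluence_def by auto
  have "\<exists>y A W. confluence EXo y j A W \<and> (b,l) \<in> path_edges A"
  proof (cases "a = b")
    case True
    then show ?thesis using c e by blast
  next
    case ab: False
    show ?thesis
    proof (cases "j = l")
      case True
      from F2[OF reach[OF aV]] obtain Sa where Sa: "dpath EXo Sa s a" by (rule exE)
      have lSa: "l \<notin> set Sa"
      proof
        assume "l \<in> set Sa"
        then have "(l,a) \<in> EXo\<^sup>*" using F1[OF Sa] by auto
        then show False using acy al acyc_rt[of EXo l a l] by auto
      qed
      from F5[OF Sa dpath_single[THEN iffD2, of l l l EXo] al]
      have W: "dpath EXo (Sa@[l]) s l" by auto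
      have "(b,l) \<notin> path_edges (Sa@[l])"
      proof
        assume "(b,l) \<in> path_edges (Sa@[l])"
        then obtain k where k: "Suc k < length (Sa@[l])" "(Sa@[l]) ! k = b" "(Sa@[l]) ! Suc k = l"
          unfolding path_edges_def by auto
        show False
        proof (cases "Suc k < length Sa")
          case True
          then have "Sa ! Suc k = l" using k by (simp add: nth_append)
          then show False using lSa True by (metis nth_mem)
        next
          case False
          then have "Suc k = length Sa" using k by auto
          then have "k = length Sa - 1" "Sa \<noteq> []" using Sa unfolding dpath_def by auto
          then have "b = Sa ! (length Sa - 1)" using k by (simp add: nth_append)
          then have "b = last Sa" using \<open>Sa \<noteq> []\<close> by (simp add: last_conv_nth)
          then show False using Sa ab unfolding dpath_def by auto
        qed
      qed
      then have "\<exists>W. dpath EXo W s j \<and> set W \<inter> set [l] \<subseteq> {j} \<and> (b,l) \<notin> path_edges W"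
        using W True by (intro exI[of _ "Sa@[l]"]) auto
      from core[OF Q this bl] True show ?thesis by auto
    next
      case jl: False
      have lp1: "l \<in> set p1" and ap1: "a \<in> set p1" using F4[OF e] by auto
      from F3[OF p1 lp1] obtain P where P: "dpath EXo P l j" "set P \<subseteq> set p1" by blast
      have ia: "(i,a) \<in> EXo\<^sup>*" using F1[OF p1 ap1] by auto
      have iV: "i \<in> V"
      proof (cases "i = a")
        case True then show ?thesis using aV by simp
      next
        case False
        then have "(i,a) \<in> EXo\<^sup>+" using ia by (simp add: rtrancl_eq_or_trancl)
        then obtain w where "(i,w) \<in> EXo" by (meson tranclD)
        then show ?thesis using sub by auto
      qed
      from F2[OF reach[OF iV]] obtain S where S: "dpath EXo S s i" by (rule exE)
      from F6[OF S p2] obtain W where W: "dpath EXo W s j" "set W \<subseteq> set S \<union> set p2" by blast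
      have WP: "set W \<inter> set P \<subseteq> {j}"
      proof
        fix v assume v: "v \<in> set W \<inter> set P"
        have lv: "(l,v) \<in> EXo\<^sup>*" using F1[OF P(1)] v by auto
        show "v \<in> {j}"
        proof (cases "v \<in> set S")
          case True
          then have "(v,i) \<in> EXo\<^sup>*" using F1[OF S] by auto
          then have "(l,a) \<in> EXo\<^sup>*" using lv ia by (meson rtrancl_trans)
          then show ?thesis using acy al acyc_rt[of EXo l a l] by auto
        next
          case False
          then have "v \<in> set p2" using v W by auto
          then have "v \<in> {i,j}" using int v P(2) by auto
          moreover have "v \<noteq> i"
          proof
            assume "v = i"
            then have "(l,a) \<in> EXo\<^sup>*" using lv ia by (meson rtrancl_trans)
            then show False using acy al acyc_rt[of EXo l a l] by auto
          qed
          ultimately show ?thesis by auto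
        qed
      qed
      have lP: "l \<in> set P" using dpath_hd[OF P(1)] by auto
      have "(b,l) \<notin> path_edges W"
      proof
        assume "(b,l) \<in> path_edges W"
        then have "b \<in> set W \<and> l \<in> set W" by (rule F4)
        then show False using WP lP jl by auto
      qed
      then have "\<exists>W. dpath EXo W s j \<and> set W \<inter> set P \<subseteq> {j} \<and> (b,l) \<notin> path_edges W"
        using W WP by blast
      from core[OF Q this bl P(1)] show ?thesis .
    qed
  qed
  then show "j \<in> label_set V EXo (b, l)" unfolding label_set_def using jV by blast
qed

theorem lemma15:
  fixes V :: "'v set" and E EXo :: "('v \<times> 'v) set" and s l a b :: 'v
  assumes "finite V"
    and "extraction_order V E EXo s"
    and "l \<in> V"
    and "(a, l) \<in> EXo" and "(b, l) \<in> EXo"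
  shows "label_set V EXo (a, l) = label_set V EXo (b, l)"
  using half[OF assms(2,4,5)] half[OF assms(2,5,4)] by blast

end
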